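(* If a $(v,[k_1,k_2,k_3],\lambda)$ Hadamard partitioned difference family exists, then no prime divisor of $(2k_1+1)(2k_2+1)(2k_3+1)$ is congruent to $5$ modulo $6$.
   Context: $G$ is a finite group of order $v$ written additively, with difference $x-y:=x+(-y)$. For $B\subseteq G$, $\Delta B$ is the multiset $\{x-y: x,y\in B, x\neq y\}$; for $\mathcal{F}=\{B_1,\dots,B_t\}$, $\Delta\mathcal{F}$ is the multiset union of the $\Delta B_i$. A $(v,[k_1,\dots,k_t],\lambda)$ partitioned difference family (PDF) is a collection $\{B_1,\dots,B_t\}$ of subsets partitioning some group $G$ of order $v$ with $|B_i|=k_i$ such that $\Delta\mathcal{F}$ contains every non-zero element of $G$ exactly $\lambda$ times. It is Hadamard (HPDF) if $v=2\lambda$. *)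

theory Defs
  imports "HOL-Library.Multiset" "HOL-Computational_Algebra.Primes"
begin

text \<open>The group G is the whole (finite) type 'a of class group_add (written additively,
not necessarily abelian); difference x - y = x + (- y).\<close>

definition delta :: "'a::group_add set \<Rightarrow> 'a multiset" where
  "delta B = image_mset (\<lambda>(x, y). x - y) (mset_set {(x, y). x \<in> B \<and> y \<in> B \<and> x \<noteq> y})"

definition Delta_fam :: "'a::group_add set list \<Rightarrow> 'a multiset" where
  "Delta_fam F = sum_list (map delta F)"

definition is_PDF :: "nat \<Rightarrow> nat list \<Rightarrow> nat \<Rightarrow> 'a::{group_add,finite} set list \<Rightarrow> bool" where
  "is_PDF v ks lam F \<longleftrightarrow>
     card (UNIV :: 'a set) = v \<and> length F = length ks \<and>
     (\<forall>i<length F. F ! i \<noteq> {} \<and> card (F ! i) = ks ! i) \<and>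
     (\<forall>i<length F. \<forall>j<length F. i \<noteq> j \<longrightarrow> F ! i \<inter> F ! j = {}) \<and>
     \<Union>(set F) = UNIV \<and>
     (\<forall>g. g \<noteq> 0 \<longrightarrow> count (Delta_fam F) g = lam)"

definition is_HPDF :: "nat \<Rightarrow> nat list \<Rightarrow> nat \<Rightarrow> 'a::{group_add,finite} set list \<Rightarrow> bool" where
  "is_HPDF v ks lam F \<longleftrightarrow> is_PDF v ks lam F \<and> v = 2 * lam"

end

theory Submission
  imports Defs "HOL-Number_Theory.Number_Theory"
begin

lemma fermat_int:
  fixes w :: int and p :: nat
  assumes "prime p" "\<not> int p dvd w"
  shows "[w ^ (p - 1) = 1] (mod int p)"
proof -
  define a where "a = nat (w mod int p)"
  have p0: "int p > 0" using assms(1) prime_gt_0_nat by simp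
  have ia: "int a = w mod int p" unfolding a_def using p0 by simp
  have "\<not> p dvd a"
  proof
    assume "p dvd a"
    then have "int p dvd int a" by simp
    then have "int p dvd w mod int p" using ia by simp
    then show False using assms(2) by (simp add: dvd_mod_iff)
  qed
  then have "[a ^ (p - 1) = 1] (mod p)" using fermat_theorem assms(1) by blast
  then have "[int a ^ (p - 1) = 1] (mod int p)"
    by (metis cong_int_iff of_nat_1 of_nat_power)
  moreover have "[int a = w] (mod int p)" using ia by (simp add: cong_def)
  ultimately show ?thesis by (meson cong_pow cong_sym cong_trans)
qed

lemma key:
  fixes y :: int and p :: nat
  assumes "prime p" "p mod 6 = 5" "int p dvd y^2 + 3"
  shows False
proof -
  define P where "P = int p"
  have podd: "odd p" using assms(2) by presburger
  have p3: "p \<noteq> 3" using assms(2) by auto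
  obtain j where pj: "p = 6*j+5" using assms(2) by (metis mod_div_mult_eq add.commute mult.commute)
  define w where "w = (y - 1 + (if even y then P else 0)) div 2"
  have w2: "2*w = y - 1 + (if even y then P else 0)"
    unfolding w_def using podd P_def by auto
  have c1: "[2*w + 1 = y] (mod P)"
    using w2 by (auto simp: cong_def)
  have "[(2*w+1)^2 + 3 = y^2 + 3] (mod P)" using c1 by (intro cong_add cong_pow) auto
  then have "P dvd (2*w+1)^2 + 3" using assms(3) P_def by (simp add: cong_dvd_iff)
  then have "P dvd 4*(w^2+w+1)" by (simp add: power2_eq_square algebra_simps)
  then have h4: "P dvd 2*(2*(w^2+w+1))" by simp
  have cp: "coprime P 2" using podd P_def by simp
  have "P dvd 2*(w^2+w+1)" using h4 cp coprime_dvd_mult_right_iff by blast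
  then have d1: "P dvd w^2+w+1" using cp coprime_dvd_mult_right_iff by blast
  then have "P dvd (w - 1)*(w^2+w+1)" by simp
  then have d3: "P dvd w^3 - 1" by (simp add: power2_eq_square power3_eq_cube algebra_simps)
  have nw: "\<not> P dvd w"
  proof
    assume "P dvd w"
    then have "P dvd w^2 + w" by (simp add: power2_eq_square)
    then have "P dvd 1" using d1 by (metis dvd_add_right_iff)
    then show False using P_def assms(1) by (simp add: prime_gt_1_nat)
  qed
  have f: "[w ^ (p - 1) = 1] (mod P)" using fermat_int assms(1) nw P_def by simp
  have e: "p - 1 = 3*(2*j+1) + 1" using pj by simp
  have "[w^3 = 1] (mod P)" using d3 by (simp add: cong_iff_dvd_diff)
  then have "[(w^3)^(2*j+1) * w = 1^(2*j+1) * w] (mod P)" by (intro cong_mult cong_pow) auto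
  moreover have "w^(p-1) = (w^3)^(2*j+1)*w" by (simp only: e power_add power_mult power_one_right)
  ultimately have "[w^(p-1) = w] (mod P)" by simp
  then have "[w = 1] (mod P)" using f by (meson cong_sym cong_trans)
  then have "[w^2+w+1 = 1^2+1+1] (mod P)" by (intro cong_add cong_pow) auto
  then have "P dvd 3" using d1 by (simp add: cong_dvd_iff)
  then have "p dvd 3" using P_def by presburger
  then show False using p3 assms(1) using primes_dvd_imp_eq[of p 3] by simp
qed

lemma size_delta:
  fixes B :: "'a::group_add set"
  assumes "finite B"
  shows "size (delta B) = card B * card B - card B"
proof -
  have e: "{(x, y). x \<in> B \<and> y \<in> B \<and> x \<noteq> y} = B \<times> B - (\<lambda>x. (x,x)) ` B" by auto
  have "card ((\<lambda>x. (x,x)) ` B) = card B" by (rule card_image) (auto simp: inj_on_def)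
  moreover have "(\<lambda>x. (x,x)) ` B \<subseteq> B \<times> B" by auto
  ultimately have "card {(x, y). x \<in> B \<and> y \<in> B \<and> x \<noteq> y} = card B * card B - card B"
    unfolding e using assms by (simp add: card_Diff_subset finite_subset card_cartesian_product)
  then show ?thesis unfolding delta_def by simp
qed

lemma zero_notin_delta:
  fixes B :: "'a::group_add set"
  shows "0 \<notin># delta B"
proof -
  let ?S = "{(x, y). x \<in> B \<and> y \<in> B \<and> x \<noteq> y}"
  have "\<And>a. (a,a) \<notin># mset_set ?S" by (cases "finite ?S") auto
  then show ?thesis unfolding delta_def by (auto simp: case_prod_beta)
qed

lemma size_fin:
  fixes M :: "'a::{zero,finite} multiset"
  assumes "0 \<notin># M" "\<forall>g. g \<noteq> 0 \<longrightarrow> count M g = lam"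
  shows "size M = (card (UNIV::'a set) - 1) * lam"
proof -
  have "size M = sum (count M) (set_mset M)" by (simp add: size_multiset_overloaded_eq)
  also have "\<dots> = sum (count M) (UNIV - {0})"
    by (rule sum.mono_neutral_left) (use assms(1) in auto)
  also have "\<dots> = (card (UNIV::'a set) - 1) * lam" using assms(2) by (simp add: card_Diff_singleton)
  finally show ?thesis .
qed

theorem corollary3p3:
  fixes F :: "'a::{group_add,finite} set list"
    and v k1 k2 k3 lam :: nat
  assumes "is_HPDF v [k1, k2, k3] lam F"
  shows "\<forall>p::nat. prime p \<and> p dvd (2*k1+1)*(2*k2+1)*(2*k3+1) \<longrightarrow> p mod 6 \<noteq> 5"
proof -
  have pdf: "is_PDF v [k1, k2, k3] lam F" and v2: "v = 2*lam" using assms by (auto simp: is_HPDF_def)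
  have "length F = 3" using pdf by (simp add: is_PDF_def)
  then obtain A B C where F: "F = [A, B, C]"
    by (cases F rule: remdups_adj.cases) (auto simp: length_Suc_conv)
  have cA: "card A = k1" and cB: "card B = k2" and cC: "card C = k3"
  proof -
    have K: "\<forall>i<3. card (F ! i) = [k1,k2,k3] ! i" using pdf unfolding is_PDF_def F by simp
    show "card A = k1" using K[rule_format, of 0] by (simp add: F)
    show "card B = k2" using K[rule_format, of 1] by (simp add: F)
    show "card C = k3" using K[rule_format, of 2] by (simp add: F)
  qed
  have D: "\<forall>i<3. \<forall>j<3. i \<noteq> j \<longrightarrow> F ! i \<inter> F ! j = {}"
    using pdf unfolding is_PDF_def F by simp
  have dAB: "A \<inter> B = {}" using D[rule_format, of 0 1] by (simp add: F)
  have dAC: "A \<inter> C = {}" using D[rule_format, of 0 2] by (simp add: F)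
  have dBC: "B \<inter> C = {}" using D[rule_format, of 1 2] by (simp add: F)
  have U: "A \<union> B \<union> C = UNIV" and cv: "card (UNIV::'a set) = v"
    using pdf unfolding is_PDF_def F by auto
  have vs: "v = k1 + k2 + k3"
  proof -
    have "card (A \<union> B \<union> C) = card (A \<union> B) + card C"
      by (rule card_Un_disjoint) (use dAC dBC in auto)
    also have "card (A \<union> B) = card A + card B" by (rule card_Un_disjoint) (use dAB in auto)
    finally show ?thesis using U cv cA cB cC by simp
  qed
  have "0 \<notin># Delta_fam F" unfolding Delta_fam_def F by (simp add: zero_notin_delta)
  moreover have "\<forall>g. g \<noteq> 0 \<longrightarrow> count (Delta_fam F) g = lam" using pdf by (simp add: is_PDF_def)
  ultimately have "size (Delta_fam F) = (v - 1) * lam" using size_fin cv by metis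
  moreover have "size (delta A) = k1*k1 - k1" using size_delta[of A] cA by simp
  moreover have "size (delta B) = k2*k2 - k2" using size_delta[of B] cB by simp
  moreover have "size (delta C) = k3*k3 - k3" using size_delta[of C] cC by simp
  moreover have "size (Delta_fam F) = size (delta A) + size (delta B) + size (delta C)"
    by (simp add: Delta_fam_def F)
  ultimately have sz: "(k1*k1 - k1) + (k2*k2 - k2) + (k3*k3 - k3) = (v - 1) * lam"
    by metis
  have "2*(int k1^2 + int k2^2 + int k3^2) = int v^2 + int v"
  proof -
    have "k1 \<le> k1*k1" "k2 \<le> k2*k2" "k3 \<le> k3*k3" by (simp_all add: le_square)
    moreover have "v \<ge> 1" proof -
      have "card (UNIV::'a set) > 0" by (simp add: card_gt_0_iff)
      then show ?thesis using cv by simp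
    qed
    ultimately have i1: "int (k1*k1 - k1) = int k1*k1 - k1" and i2: "int (k2*k2 - k2) = int k2*k2 - k2"
        and i3: "int (k3*k3 - k3) = int k3*k3 - k3" by (simp_all add: of_nat_diff)
    have "int ((k1*k1 - k1) + (k2*k2 - k2) + (k3*k3 - k3)) = (int k1*k1 - k1) + (int k2*k2 - k2) + (int k3*k3 - k3)"
      by (simp only: of_nat_add i1 i2 i3)
    moreover have "int ((v - 1) * lam) = (int v - 1) * int lam" using \<open>v \<ge> 1\<close> by (simp add: of_nat_diff)
    ultimately have "(int k1*k1 - k1) + (int k2*k2 - k2) + (int k3*k3 - k3) = (int v - 1) * int lam" using sz by metis
    then have "int k1*k1 + int k2*k2 + int k3*k3 - (int k1 + int k2 + int k3) = (int v - 1) * int lam" by simp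
    then have "2*(int k1*k1 + int k2*k2 + int k3*k3) - 2*int v = (int v - 1) * (2*int lam)" using vs by (simp add: algebra_simps)
    then have "2*(int k1*k1 + int k2*k2 + int k3*k3) - 2*int v = (int v - 1) * int v" using v2 by simp
    then show ?thesis by (simp add: power2_eq_square algebra_simps)
  qed
  then have Q: "2*(int k1^2 + int k2^2 + int k3^2) = (int k1 + int k2 + int k3)^2 + (int k1 + int k2 + int k3)"
    using vs by simp
  define x1 where "x1 = 2 * int k1 + 1"
  define x2 where "x2 = 2 * int k2 + 1"
  define x3 where "x3 = 2 * int k3 + 1"
  have I3: "(x1 - x2)^2 + 3 = x3 * (2*(x1+x2) - x3)"
    using Q unfolding x1_def x2_def x3_def by (simp add: power2_eq_square algebra_simps)
  have I2: "(x1 - x3)^2 + 3 = x2 * (2*(x1+x3) - x2)"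
    using Q unfolding x1_def x2_def x3_def by (simp add: power2_eq_square algebra_simps)
  have I1: "(x2 - x3)^2 + 3 = x1 * (2*(x2+x3) - x1)"
    using Q unfolding x1_def x2_def x3_def by (simp add: power2_eq_square algebra_simps)
  show ?thesis
  proof (intro allI impI notI)
    fix p :: nat
    assume h: "prime p \<and> p dvd (2*k1+1)*(2*k2+1)*(2*k3+1)" and m: "p mod 6 = 5"
    then have "p dvd 2*k1+1 \<or> p dvd 2*k2+1 \<or> p dvd 2*k3+1" using prime_dvd_mult_iff by metis
    then have "int p dvd x1 \<or> int p dvd x2 \<or> int p dvd x3"
      unfolding x1_def x2_def x3_def by (metis of_nat_dvd_iff of_nat_Suc of_nat_mult of_nat_numeral Suc_eq_plus1 add.commute of_nat_add of_nat_1)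
    then have "int p dvd (x2 - x3)^2 + 3 \<or> int p dvd (x1 - x3)^2 + 3 \<or> int p dvd (x1 - x2)^2 + 3"
      unfolding I1 I2 I3 by auto
    then show False using key h m by blast
  qed
qed


end
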